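(* The group $\Gamma({A_1}_1)$ of permutations of $\mathbb Q\times\mathbb Z$ preserving the 1-codirection relation ${A_1}_1$ coincides with the set of all permutations of $\mathbb Q\times\mathbb Z$ that are either positive or negative.
   Context: $\mathbb Q\times\mathbb Z$ denotes the set $\mathbb Q\times\mathbb Z$ with the lexicographic order: $(r,z)<(r',z')$ iff $r<r'$, or $r=r'$ and $z<z'$. Relations defined on $\mathbb Z$ by first-order formulas in the signature $\{<\}$ are interpreted on $\mathbb Q\times\mathbb Z$ by the same formulas, and $\Gamma(R)$ is the group of permutations of $\mathbb Q\times\mathbb Z$ preserving $R$ (i.e. $R(\bar a)\iff R(g(\bar a))$). The 1-codirection relation is ${A_1}_1(x,y,z,t)\iff (x-y=z-t)\wedge|x-y|=1$, expressed in the order signature as: ($x$ is the immediate successor of $y$ and $z$ is the immediate successor of $t$) or ($y$ is the immediate successor of $x$ and $t$ is the immediate successor of $z$). A vertical is a set $\{r\}\times\mathbb Z$, $r\in\mathbb Q$. A permutation is systemic if it maps every vertical onto a vertical. A systemic permutation is positive if it preserves the order on each vertical (i.e. its restriction to each vertical is order preserving), and negative if it reverses the order on each vertical. *)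

theory Defs
  imports Main "HOL.Rat"
begin

type_synonym pt = "rat \<times> int"

definition lexless :: "pt \<Rightarrow> pt \<Rightarrow> bool" where
  "lexless a b \<longleftrightarrow> fst a < fst b \<or> (fst a = fst b \<and> snd a < snd b)"

definition imm_succ :: "pt \<Rightarrow> pt \<Rightarrow> bool" where
  "imm_succ x y \<longleftrightarrow> lexless y x \<and> \<not> (\<exists>w. lexless y w \<and> lexless w x)"

definition A11 :: "pt \<Rightarrow> pt \<Rightarrow> pt \<Rightarrow> pt \<Rightarrow> bool" where
  "A11 x y z t \<longleftrightarrow> (imm_succ x y \<and> imm_succ z t) \<or> (imm_succ y x \<and> imm_succ t z)"

definition Gamma4 :: "(pt \<Rightarrow> pt \<Rightarrow> pt \<Rightarrow> pt \<Rightarrow> bool) \<Rightarrow> (pt \<Rightarrow> pt) set" where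
  "Gamma4 R = {g. bij g \<and> (\<forall>a b c d. R a b c d \<longleftrightarrow> R (g a) (g b) (g c) (g d))}"

definition vertical :: "rat \<Rightarrow> pt set" where
  "vertical r = {r} \<times> UNIV"

definition systemic :: "(pt \<Rightarrow> pt) \<Rightarrow> bool" where
  "systemic g \<longleftrightarrow> bij g \<and> (\<forall>r. \<exists>r'. g ` vertical r = vertical r')"

definition positive_perm :: "(pt \<Rightarrow> pt) \<Rightarrow> bool" where
  "positive_perm g \<longleftrightarrow> systemic g \<and>
     (\<forall>r. \<forall>a\<in>vertical r. \<forall>b\<in>vertical r. lexless a b \<longrightarrow> lexless (g a) (g b))"

definition negative_perm :: "(pt \<Rightarrow> pt) \<Rightarrow> bool" where
  "negative_perm g \<longleftrightarrow> systemic g \<and>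
     (\<forall>r. \<forall>a\<in>vertical r. \<forall>b\<in>vertical r. lexless a b \<longrightarrow> lexless (g b) (g a))"

end

theory Submission
  imports Defs
begin

lemma S_iff: "imm_succ x y \<longleftrightarrow> fst x = fst y \<and> snd x = snd y + 1"
proof
  assume h: "imm_succ x y"
  hence l: "lexless y x" and nw: "\<not> (\<exists>w. lexless y w \<and> lexless w x)"
    unfolding imm_succ_def by auto
  have f: "fst x = fst y"
  proof (rule ccontr)
    assume "fst x \<noteq> fst y"
    with l have "fst y < fst x" unfolding lexless_def by auto
    hence "lexless y (fst y, snd y + 1) \<and> lexless (fst y, snd y + 1) x"
      unfolding lexless_def by auto
    with nw show False by blast
  qed
  with l have lt: "snd y < snd x" unfolding lexless_def by auto
  have "\<not> snd x > snd y + 1"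
  proof
    assume "snd x > snd y + 1"
    hence "lexless y (fst x, snd y + 1) \<and> lexless (fst x, snd y + 1) x"
      using f unfolding lexless_def by auto
    with nw show False by blast
  qed
  with f lt show "fst x = fst y \<and> snd x = snd y + 1" by auto
next
  assume "fst x = fst y \<and> snd x = snd y + 1"
  thus "imm_succ x y" unfolding imm_succ_def lexless_def by auto
qed

lemma mono_bij_int:
  fixes h :: "int \<Rightarrow> int"
  assumes s: "surj h" and m: "\<And>a b. a < b \<Longrightarrow> h a < h b"
  shows "h n = h 0 + n"
proof -
  have step: "h (k+1) = h k + 1" for k
  proof -
    have a: "h k < h (k+1)" using m by simp
    obtain j where j: "h j = h k + 1" using s by (metis surjD)
    have "\<not> j \<le> k"
    proof
      assume "j \<le> k"
      hence "h j \<le> h k" using m by (cases "j = k") (auto simp: less_imp_le)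
      with j show False by simp
    qed
    hence "k + 1 \<le> j" by simp
    hence "h (k+1) \<le> h j" using m by (cases "j = k+1") (auto simp: less_imp_le)
    with a j show ?thesis by simp
  qed
  show ?thesis
  proof (induction n rule: int_induct[where k=0])
    case base then show ?case by simp
  next
    case (step1 i) then show ?case using step[of i] by simp
  next
    case (step2 i) then show ?case using step[of "i - 1"] by simp
  qed
qed

lemma pos_form:
  assumes p: "positive_perm g"
  shows "g (r, m) = (fst (g (r,0)), snd (g (r,0)) + m)"
proof -
  obtain r' where r': "g ` vertical r = vertical r'"
    using p unfolding positive_perm_def systemic_def by blast
  have fr: "fst (g (r, k)) = r'" for k
  proof -
    have "(r, k) \<in> vertical r" unfolding vertical_def by simp
    hence "g (r, k) \<in> vertical r'" using r' by blast
    thus ?thesis unfolding vertical_def by (simp add: mem_Times_iff)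
  qed
  define h where "h k = snd (g (r, k))" for k
  have s: "surj h"
  proof -
    { fix k
      have "(r', k) \<in> g ` vertical r" using r' unfolding vertical_def by auto
      then obtain v where "v \<in> vertical r" "g v = (r', k)" by auto
      hence "h (snd v) = k" unfolding h_def vertical_def by auto
      hence "k \<in> range h" by auto }
    thus ?thesis by auto
  qed
  have mo: "h a < h b" if "a < b" for a b
  proof -
    have "lexless (g (r,a)) (g (r,b))"
      using p that unfolding positive_perm_def vertical_def lexless_def by auto
    thus ?thesis unfolding h_def lexless_def using fr by auto
  qed
  have "h m = h 0 + m" using mono_bij_int[OF s mo] .
  thus ?thesis using fr[of m] fr[of 0] unfolding h_def by (metis prod.collapse)
qed

lemma neg_form:
  assumes p: "negative_perm g"
  shows "g (r, m) = (fst (g (r,0)), snd (g (r,0)) - m)"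
proof -
  obtain r' where r': "g ` vertical r = vertical r'"
    using p unfolding negative_perm_def systemic_def by blast
  have fr: "fst (g (r, k)) = r'" for k
  proof -
    have "(r, k) \<in> vertical r" unfolding vertical_def by simp
    hence "g (r, k) \<in> vertical r'" using r' by blast
    thus ?thesis unfolding vertical_def by (simp add: mem_Times_iff)
  qed
  define h where "h k = - snd (g (r, k))" for k
  have s: "surj h"
  proof -
    { fix k
      have "(r', -k) \<in> g ` vertical r" using r' unfolding vertical_def by auto
      then obtain v where "v \<in> vertical r" "g v = (r', -k)" by auto
      hence "h (snd v) = k" unfolding h_def vertical_def by auto
      hence "k \<in> range h" by auto }
    thus ?thesis by auto
  qed
  have mo: "h a < h b" if "a < b" for a b
  proof -
    have "lexless (g (r,b)) (g (r,a))"
      using p that unfolding negative_perm_def vertical_def lexless_def by auto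
    thus ?thesis unfolding h_def lexless_def using fr by auto
  qed
  have "h m = h 0 + m" using mono_bij_int[OF s mo] .
  thus ?thesis using fr[of m] fr[of 0] unfolding h_def by (metis prod.collapse add.commute diff_conv_add_uminus minus_add_distrib minus_minus)
qed

lemma inj_c:
  fixes g :: "pt \<Rightarrow> pt"
  assumes "inj g" "\<And>r m. g (r, m) = (c r, d r + e * m)" "e = 1 \<or> e = -1" "c r = c r'"
  shows "r = r'"
proof -
  have "g (r, 0) = g (r', e * (d r - d r'))" using assms by (auto simp: algebra_simps)
  thus ?thesis using assms(1) by (metis injD prod.inject)
qed

lemma succ_pres:
  fixes g :: "pt \<Rightarrow> pt"
  assumes "inj g" "\<And>r m. g (r, m) = (c r, d r + e * m)" "e = 1 \<or> e = -1"
  shows "imm_succ (g x) (g y) \<longleftrightarrow> (if e = 1 then imm_succ x y else imm_succ y x)"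
proof -
  obtain x1 x2 y1 y2 where x: "x = (x1,x2)" and y: "y = (y1, y2)" by fastforce
  have "c x1 = c y1 \<longleftrightarrow> x1 = y1" using inj_c[OF assms] by blast
  thus ?thesis using assms(3) unfolding S_iff x y assms(2) by auto
qed

lemma form_Gamma:
  fixes g :: "pt \<Rightarrow> pt"
  assumes "bij g" "\<And>r m. g (r, m) = (c r, d r + e * m)" "e = 1 \<or> e = -1"
  shows "g \<in> Gamma4 A11"
proof -
  have i: "inj g" using assms(1) bij_is_inj by auto
  note sp = succ_pres[OF i assms(2,3)]
  show ?thesis unfolding Gamma4_def A11_def using assms(1) sp assms(3) by auto
qed

lemma form_of_succ:
  assumes P: "\<And>z t. imm_succ z t \<Longrightarrow> imm_succ (g z) (g t)"
  shows "g (r, m) = (fst (g (r,0)), snd (g (r,0)) + m)"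
proof (induction m rule: int_induct[where k=0])
  case base then show ?case by simp
next
  case (step1 i)
  have "imm_succ (r, i+1) (r, i)" by (simp add: S_iff)
  from P[OF this] step1 show ?case by (simp add: S_iff prod_eq_iff)
next
  case (step2 i)
  have "imm_succ (r, i) (r, i - 1)" by (simp add: S_iff)
  from P[OF this] step2 show ?case by (simp add: S_iff prod_eq_iff)
qed

lemma form_of_succ_neg:
  assumes P: "\<And>z t. imm_succ z t \<Longrightarrow> imm_succ (g t) (g z)"
  shows "g (r, m) = (fst (g (r,0)), snd (g (r,0)) - m)"
proof (induction m rule: int_induct[where k=0])
  case base then show ?case by simp
next
  case (step1 i)
  have "imm_succ (r, i+1) (r, i)" by (simp add: S_iff)
  from P[OF this] step1 show ?case by (simp add: S_iff prod_eq_iff)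
next
  case (step2 i)
  have "imm_succ (r, i) (r, i - 1)" by (simp add: S_iff)
  from P[OF this] step2 show ?case by (simp add: S_iff prod_eq_iff)
qed

lemma form_systemic:
  fixes g :: "pt \<Rightarrow> pt"
  assumes "bij g" "\<And>r m. g (r, m) = (c r, d r + e * m)" "e = 1 \<or> e = -1"
  shows "systemic g"
proof -
  have "g ` vertical r = vertical (c r)" for r
  proof
    show "g ` vertical r \<subseteq> vertical (c r)" using assms(2) unfolding vertical_def by auto
    show "vertical (c r) \<subseteq> g ` vertical r"
    proof
      fix p assume "p \<in> vertical (c r)"
      then obtain k where p: "p = (c r, k)" unfolding vertical_def by auto
      have "g (r, e * (k - d r)) = p" using assms(2,3) p by auto
      thus "p \<in> g ` vertical r" unfolding vertical_def by force
    qed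
  qed
  thus ?thesis using assms(1) unfolding systemic_def by blast
qed

theorem lemma1:
  shows "Gamma4 A11 = {g. bij g \<and> (positive_perm g \<or> negative_perm g)}"
proof
  show "Gamma4 A11 \<subseteq> {g. bij g \<and> (positive_perm g \<or> negative_perm g)}"
  proof
    fix g assume gG: "g \<in> Gamma4 A11"
    hence b: "bij g" and H: "\<And>a b c d. A11 a b c d \<longleftrightarrow> A11 (g a) (g b) (g c) (g d)"
      unfolding Gamma4_def by auto
    define x0 :: pt where "x0 = (0,1)"
    define y0 :: pt where "y0 = (0,0)"
    have s0: "imm_succ x0 y0" unfolding x0_def y0_def by (simp add: S_iff)
    have "A11 x0 y0 x0 y0" using s0 unfolding A11_def by auto
    hence "A11 (g x0) (g y0) (g x0) (g y0)" using H by blast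
    hence "imm_succ (g x0) (g y0) \<or> imm_succ (g y0) (g x0)" unfolding A11_def by auto
    thus "g \<in> {g. bij g \<and> (positive_perm g \<or> negative_perm g)}"
    proof
      assume c1: "imm_succ (g x0) (g y0)"
      have P: "imm_succ (g z) (g t)" if "imm_succ z t" for z t
      proof -
        have "A11 x0 y0 z t" using s0 that unfolding A11_def by auto
        hence "A11 (g x0) (g y0) (g z) (g t)" using H by blast
        thus ?thesis using c1 unfolding A11_def S_iff by auto
      qed
      define c where "c r = fst (g (r,0))" for r
      define d where "d r = snd (g (r,0))" for r
      have F: "g (r, m) = (c r, d r + 1 * m)" for r m
        using form_of_succ[OF P] unfolding c_def d_def by simp
      have "positive_perm g"
        unfolding positive_perm_def
      proof (intro conjI allI ballI impI)
        show "systemic g" using form_systemic[OF b F] by simp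
        fix r a b' assume "a \<in> vertical r" "b' \<in> vertical r" "lexless a b'"
        thus "lexless (g a) (g b')" using F unfolding vertical_def lexless_def
          by (cases a, cases b') auto
      qed
      thus ?thesis using b by auto
    next
      assume c1: "imm_succ (g y0) (g x0)"
      have P: "imm_succ (g t) (g z)" if "imm_succ z t" for z t
      proof -
        have "A11 x0 y0 z t" using s0 that unfolding A11_def by auto
        hence "A11 (g x0) (g y0) (g z) (g t)" using H by blast
        thus ?thesis using c1 unfolding A11_def S_iff by auto
      qed
      define c where "c r = fst (g (r,0))" for r
      define d where "d r = snd (g (r,0))" for r
      have F: "g (r, m) = (c r, d r + (-1) * m)" for r m
        using form_of_succ_neg[OF P] unfolding c_def d_def by simp
      have "negative_perm g"
        unfolding negative_perm_def
      proof (intro conjI allI ballI impI)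
        show "systemic g" using form_systemic[OF b F] by simp
        fix r a b' assume "a \<in> vertical r" "b' \<in> vertical r" "lexless a b'"
        thus "lexless (g b') (g a)" using F unfolding vertical_def lexless_def
          by (cases a, cases b') auto
      qed
      thus ?thesis using b by auto
    qed
  qed
next
  show "{g. bij g \<and> (positive_perm g \<or> negative_perm g)} \<subseteq> Gamma4 A11"
  proof
    fix g assume "g \<in> {g. bij g \<and> (positive_perm g \<or> negative_perm g)}"
    hence b: "bij g" and pn: "positive_perm g \<or> negative_perm g" by auto
    define c where "c r = fst (g (r,0))" for r
    define d where "d r = snd (g (r,0))" for r
    from pn show "g \<in> Gamma4 A11"
    proof
      assume "positive_perm g"
      hence "g (r, m) = (c r, d r + 1 * m)" for r m using pos_form unfolding c_def d_def by simp
      thus ?thesis using form_Gamma[OF b] by blast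
    next
      assume "negative_perm g"
      hence "g (r, m) = (c r, d r + (-1) * m)" for r m using neg_form unfolding c_def d_def by simp
      thus ?thesis using form_Gamma[OF b] by blast
    qed
  qed
qed

end
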